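(* Let $\mathcal{P}_t=\{0=s_0<s_1<\dots<s_{N_t}=t\}$, let $\mathbf{Y}_{s_0},\dots,\mathbf{Y}_{s_{N_t}}\in\mathbb{R}^d$, and define forward differences by $\hat{D}^0\mathbf{Y}_{s_n}=\mathbf{Y}_{s_n}$ and $\hat{D}^k\mathbf{Y}_{s_n}=(\hat{D}^{k-1}\mathbf{Y}_{s_{n+1}}-\hat{D}^{k-1}\mathbf{Y}_{s_n})/(s_{n+1}-s_n)$. Then for $k\in\{1,\dots,p-1\}$ and $n\in\{0,\dots,N_t-k\}$, $$\hat{D}^k\mathbf{Y}_{s_n}=\sum_{i=1}^k(-1)^{k+i}\sum_{\substack{n_1,\dots,n_i\ge1\\ n_1+\dots+n_i=k}}(s_{n+1}-s_n)^{-n_1}\cdots(s_{n+i}-s_{n+i-1})^{-n_i}\,(\mathbf{Y}_{s_{n+i}}-\mathbf{Y}_{s_{n+i-1}}).$$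
   Context: $p\ge2$ is an integer; the $n_j$ range over positive integers. *)

theory Defs
  imports "HOL-Analysis.Analysis"
begin

fun Dhat :: "(nat \<Rightarrow> real) \<Rightarrow> (nat \<Rightarrow> real ^ 'd) \<Rightarrow> nat \<Rightarrow> nat \<Rightarrow> real ^ 'd" where
  "Dhat s Y 0 n = Y n"
| "Dhat s Y (Suc k) n =
     (1 / (s (Suc n) - s n)) *\<^sub>R (Dhat s Y k (Suc n) - Dhat s Y k n)"

definition compositions :: "nat \<Rightarrow> nat \<Rightarrow> nat list set" where
  "compositions k i = {ns. length ns = i \<and> (\<forall>m\<in>set ns. m \<ge> 1) \<and> sum_list ns = k}"

end

theory Submission
  imports Defs
begin

fun PP :: "(nat \<Rightarrow> real) \<Rightarrow> nat \<Rightarrow> nat list \<Rightarrow> real" where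
  "PP s n [] = 1"
| "PP s n (m # r) = inverse (s (Suc n) - s n) ^ m * PP s (Suc n) r"

lemma PP_prod: "PP s n ns = (\<Prod>j<length ns. inverse (s (n + j + 1) - s (n + j)) ^ (ns ! j))"
proof (induction ns arbitrary: n)
  case Nil then show ?case by simp
next
  case (Cons m r)
  show ?case
    by (simp add: Cons prod.lessThan_Suc_shift del: prod.lessThan_Suc)
qed

definition CC :: "(nat \<Rightarrow> real) \<Rightarrow> nat \<Rightarrow> nat \<Rightarrow> nat \<Rightarrow> real" where
  "CC s k i n = (\<Sum>ns\<in>compositions k i. PP s n ns)"

lemma comp_finite: "finite (compositions k i)"
proof -
  have "compositions k i \<subseteq> {xs. set xs \<subseteq> {0..k} \<and> length xs = i}"
    unfolding compositions_def
    using elem_le_sum_list by (auto simp: in_set_conv_nth)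
  moreover have "finite {xs. set xs \<subseteq> {0..k} \<and> length xs = i}"
    by (rule finite_lists_length_eq) simp
  ultimately show ?thesis by (rule finite_subset)
qed

lemma sum_list_ge_length: "\<forall>m\<in>set ns. (m::nat) \<ge> 1 \<Longrightarrow> sum_list ns \<ge> length ns"
  by (induction ns) auto

lemma comp_0: "k \<ge> 1 \<Longrightarrow> compositions k 0 = {}"
  unfolding compositions_def by auto

lemma comp_big: "compositions k (Suc k) = {}"
  unfolding compositions_def using sum_list_ge_length by fastforce

lemma CC_0: "k \<ge> 1 \<Longrightarrow> CC s k 0 n = 0"
  by (simp add: CC_def comp_0)

lemma CC_big: "CC s k (Suc k) n = 0"
  by (simp add: CC_def comp_big)

lemma CC_rec:
  "CC s (Suc k) (Suc i) n = inverse (s (Suc n) - s n) * (CC s k i (Suc n) + CC s k (Suc i) n)"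
proof -
  let ?A = "compositions (Suc k) (Suc i)"
  let ?B1 = "{ns\<in>?A. hd ns = 1}"
  let ?B2 = "{ns\<in>?A. hd ns \<noteq> 1}"
  define f where "f = (\<lambda>ns::nat list. Suc (hd ns) # tl ns)"
  have A: "?A = ?B1 \<union> ?B2" by auto
  have fin: "finite ?A" by (rule comp_finite)
  have B1: "?B1 = (Cons 1) ` compositions k i"
  proof
    show "?B1 \<subseteq> (Cons 1) ` compositions k i"
    proof
      fix ns assume "ns \<in> ?B1"
      then obtain r where "ns = 1 # r" "r \<in> compositions k i"
        unfolding compositions_def by (cases ns) auto
      then show "ns \<in> (Cons 1) ` compositions k i" by blast
    qed
    show "(Cons 1) ` compositions k i \<subseteq> ?B1"
      unfolding compositions_def by auto
  qed
  have B2: "?B2 = f ` compositions k (Suc i)"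
  proof
    show "?B2 \<subseteq> f ` compositions k (Suc i)"
    proof
      fix ns assume "ns \<in> ?B2"
      then obtain m r where ns: "ns = Suc m # r" "m \<ge> 1" "m # r \<in> compositions k (Suc i)"
      proof (cases ns)
        case Nil then show ?thesis using \<open>ns \<in> ?B2\<close> by (simp add: compositions_def)
      next
        case (Cons a r)
        with \<open>ns \<in> ?B2\<close> have a: "a \<ge> 2" "r \<in> compositions (Suc k - a) i" "a \<le> Suc k"
          by (auto simp: compositions_def)
        define m where "m = a - 1"
        have "a = Suc m" "m \<ge> 1" using a(1) by (auto simp: m_def)
        moreover have "m # r \<in> compositions k (Suc i)" using a \<open>a = Suc m\<close> \<open>m \<ge> 1\<close>
          by (auto simp: compositions_def)
        ultimately show ?thesis using that Cons by blast
      qed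
      then have "ns = f (m # r)" by (simp add: f_def)
      then show "ns \<in> f ` compositions k (Suc i)" using ns by blast
    qed
    show "f ` compositions k (Suc i) \<subseteq> ?B2"
    proof
      fix ns assume "ns \<in> f ` compositions k (Suc i)"
      then obtain m r where "ns = Suc m # r" "m \<ge> 1" "m # r \<in> compositions k (Suc i)"
        unfolding compositions_def f_def by (auto simp: length_Suc_conv)
      then show "ns \<in> ?B2" unfolding compositions_def by auto
    qed
  qed
  have inj2: "inj_on f (compositions k (Suc i))"
  proof (rule inj_onI)
    fix x y assume "x \<in> compositions k (Suc i)" "y \<in> compositions k (Suc i)" "f x = f y"
    then have "x \<noteq> []" "y \<noteq> []" "hd x = hd y" "tl x = tl y"
      by (auto simp: compositions_def f_def)
    then show "x = y" by (metis list.collapse)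
  qed
  have s1: "sum (PP s n) ?B1 = inverse (s (Suc n) - s n) * CC s k i (Suc n)"
    unfolding B1 CC_def by (simp add: sum.reindex sum_distrib_left)
  have s2: "sum (PP s n) ?B2 = inverse (s (Suc n) - s n) * CC s k (Suc i) n"
  proof -
    have "sum (PP s n) ?B2 = sum (PP s n \<circ> f) (compositions k (Suc i))"
      unfolding B2 by (rule sum.reindex[OF inj2])
    also have "\<dots> = sum (\<lambda>ns. inverse (s (Suc n) - s n) * PP s n ns) (compositions k (Suc i))"
      by (rule sum.cong) (auto simp: f_def compositions_def length_Suc_conv)
    finally show ?thesis by (simp add: CC_def sum_distrib_left)
  qed
  have "CC s (Suc k) (Suc i) n = sum (PP s n) ?B1 + sum (PP s n) ?B2"
    unfolding CC_def by (subst A, rule sum.union_disjoint) (use fin in auto)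
  then show ?thesis using s1 s2 by (simp add: algebra_simps)
qed

lemma main:
  "1 \<le> k \<Longrightarrow> Dhat s Y k n =
     (\<Sum>i = 1..k. ((-1) ^ (k + i) * CC s k i n) *\<^sub>R (Y (n + i) - Y (n + i - 1)))"
proof (induction k arbitrary: n)
  case 0 then show ?case by simp
next
  case (Suc k)
  show ?case
  proof (cases "k = 0")
    case True
    have "compositions 1 1 = {[1]}"
      unfolding compositions_def by (auto simp: length_Suc_conv)
    then show ?thesis using True by (simp add: CC_def divide_inverse)
  next
    case False
    then have k1: "1 \<le> k" by simp
    define D where "D = (\<lambda>i. Y (n + i) - Y (n + i - 1))"
    define h where "h = inverse (s (Suc n) - s n)"
    have G1: "Dhat s Y k (Suc n) = (\<Sum>j = 0..k. ((-1) ^ (k + j) * CC s k j (Suc n)) *\<^sub>R D (Suc j))"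
    proof -
      have "Dhat s Y k (Suc n) = (\<Sum>i = 1..k. ((-1) ^ (k + i) * CC s k i (Suc n)) *\<^sub>R D (Suc i))"
        using Suc.IH[OF k1, of "Suc n"] by (simp add: D_def)
      also have "\<dots> = (\<Sum>j = 0..k. ((-1) ^ (k + j) * CC s k j (Suc n)) *\<^sub>R D (Suc j))"
        by (simp add: sum.atLeast_Suc_atMost[of 0 k] CC_0[OF k1])
      finally show ?thesis .
    qed
    have G0: "Dhat s Y k n = (\<Sum>j = 0..k. ((-1) ^ (k + Suc j) * CC s k (Suc j) n) *\<^sub>R D (Suc j))"
    proof -
      have "Dhat s Y k n = (\<Sum>i = Suc 0..Suc (k - 1). ((-1) ^ (k + i) * CC s k i n) *\<^sub>R D i)"
        using Suc.IH[OF k1, of n] k1 by (simp add: D_def)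
      also have "\<dots> = (\<Sum>j = 0..k - 1. ((-1) ^ (k + Suc j) * CC s k (Suc j) n) *\<^sub>R D (Suc j))"
        by (rule sum.shift_bounds_cl_Suc_ivl)
      also have "\<dots> = (\<Sum>j = 0..k. ((-1) ^ (k + Suc j) * CC s k (Suc j) n) *\<^sub>R D (Suc j))"
      proof -
        obtain k' where kk: "k = Suc k'" using k1 by (cases k) auto
        show ?thesis unfolding kk by (simp add: sum.atLeast0_atMost_Suc CC_big)
      qed
      finally show ?thesis .
    qed
    have "Dhat s Y (Suc k) n = h *\<^sub>R (Dhat s Y k (Suc n) - Dhat s Y k n)"
      by (simp add: h_def divide_inverse)
    also have "\<dots> = (\<Sum>j = 0..k. ((-1) ^ (k + j) * (h * (CC s k j (Suc n) + CC s k (Suc j) n))) *\<^sub>R D (Suc j))"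
      unfolding G1 G0 scaleR_right_diff_distrib scaleR_sum_right sum_subtractf[symmetric]
      by (rule sum.cong) (auto simp: algebra_simps)
    also have "\<dots> = (\<Sum>j = 0..k. ((-1) ^ (Suc k + Suc j) * CC s (Suc k) (Suc j) n) *\<^sub>R D (Suc j))"
      by (simp add: CC_rec h_def)
    also have "\<dots> = (\<Sum>i = Suc 0..Suc k. ((-1) ^ (Suc k + i) * CC s (Suc k) i n) *\<^sub>R D i)"
      by (rule sum.shift_bounds_cl_Suc_ivl[symmetric])
    finally show ?thesis by (simp add: D_def)
  qed
qed

theorem lemma7:
  fixes p :: nat and N :: nat and t :: real
    and s :: "nat \<Rightarrow> real" and Y :: "nat \<Rightarrow> real ^ 'd"
    and k n :: nat
  assumes "p \<ge> 2"
    and "s 0 = 0" and "s N = t"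
    and "\<And>j. j < N \<Longrightarrow> s j < s (Suc j)"
    and "1 \<le> k" and "k \<le> p - 1"
    and "n + k \<le> N"
  shows "Dhat s Y k n =
    (\<Sum>i = 1..k. ((-1) ^ (k + i)) *\<^sub>R
       (\<Sum>ns\<in>compositions k i.
          (\<Prod>j<i. inverse (s (n + j + 1) - s (n + j)) ^ (ns ! j))
            *\<^sub>R (Y (n + i) - Y (n + i - 1))))"
proof -
  have "Dhat s Y k n =
     (\<Sum>i = 1..k. ((-1) ^ (k + i) * CC s k i n) *\<^sub>R (Y (n + i) - Y (n + i - 1)))"
    by (rule main[OF assms(5)])
  also have "\<dots> = (\<Sum>i = 1..k. ((-1) ^ (k + i)) *\<^sub>R
       (\<Sum>ns\<in>compositions k i.
          (\<Prod>j<i. inverse (s (n + j + 1) - s (n + j)) ^ (ns ! j))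
            *\<^sub>R (Y (n + i) - Y (n + i - 1))))"
  proof (rule sum.cong[OF refl])
    fix i
    have "CC s k i n = (\<Sum>ns\<in>compositions k i.
          (\<Prod>j<i. inverse (s (n + j + 1) - s (n + j)) ^ (ns ! j)))"
      unfolding CC_def by (rule sum.cong[OF refl]) (simp add: PP_prod compositions_def)
    then show "((-1) ^ (k + i) * CC s k i n) *\<^sub>R (Y (n + i) - Y (n + i - 1)) =
      ((-1) ^ (k + i)) *\<^sub>R (\<Sum>ns\<in>compositions k i.
          (\<Prod>j<i. inverse (s (n + j + 1) - s (n + j)) ^ (ns ! j))
            *\<^sub>R (Y (n + i) - Y (n + i - 1)))"
      unfolding scaleR_sum_left[symmetric] scaleR_scaleR by simp
  qed
  finally show ?thesis .
qed

end
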